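(* Let $\alpha>0$ and $\zeta>0$, and define the power series $$\Omega_0^{(4)}(v)=\frac{\Gamma(3/4)}{\Gamma(\zeta/4)}\sum_{l=0}^{\infty}\frac{\Gamma(l/2+\zeta/4)}{l!\,\Gamma(l/2+3/4)}\Big(\frac{-v^2}{2\alpha^{1/2}}\Big)^l,$$ $$\Omega_1^{(4)}(v)=\frac{v\sqrt{\pi/2}}{\Gamma[(\zeta+1)/4]}\sum_{l=0}^{\infty}\frac{\Gamma[(l+1+\zeta)/4]\,s(l)}{\Gamma(l/4+1)\,\Gamma[(l+3)/2]}\Big[\frac{-v}{(4\alpha)^{1/4}}\Big]^l,$$ with $s(l)=2^{-1/2}[\cos(l\pi/4)+\sin(l\pi/4)]\cos(l\pi/4)$. Let $$f_1(v)={}_1F_2\Big(\tfrac{\zeta}{4};\tfrac12,\tfrac34;\tfrac{v^4}{16\alpha}\Big),\quad f_2(v)=v\,{}_1F_2\Big(\tfrac{\zeta+1}{4};\tfrac34,\tfrac54;\tfrac{v^4}{16\alpha}\Big),\quad f_3(v)=v^2\,{}_1F_2\Big(\tfrac{\zeta+2}{4};\tfrac54,\tfrac32;\tfrac{v^4}{16\alpha}\Big).$$ Then $f_1,f_2,f_3$ are three linearly independent solutions of $\big(\alpha\,\tfrac{d^3}{dv^3}-v^2\tfrac{d}{dv}-\zeta v\big)\Omega(v)=0$, and $$\Omega_0^{(4)}=f_1-\frac{2\,\Gamma(3/4)\,\Gamma[(\zeta+2)/4]}{\sqrt{\alpha}\,\Gamma(1/4)\,\Gamma(\zeta/4)}\,f_3,\qquad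 \Omega_1^{(4)}=f_2-\frac{(2\pi)^{1/2}\,\Gamma[(\zeta+2)/4]}{\alpha^{1/4}\,\Gamma(1/4)\,\Gamma[(\zeta+1)/4]}\,f_3 .$$
   Context: ${}_1F_2$ is the generalized hypergeometric function; $\alpha^{1/2},\alpha^{1/4}$ denote positive roots. *)

theory Defs
  imports "HOL-Analysis.Analysis"
begin

definition hyp1F2 :: "real \<Rightarrow> real \<Rightarrow> real \<Rightarrow> real \<Rightarrow> real" where
  "hyp1F2 a b1 b2 z =
     (\<Sum>n. pochhammer a n / (pochhammer b1 n * pochhammer b2 n * fact n) * z ^ n)"

definition Omega0 :: "real \<Rightarrow> real \<Rightarrow> real \<Rightarrow> real" where
  "Omega0 \<alpha> \<zeta> v = Gamma (3/4) / Gamma (\<zeta>/4) *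
     (\<Sum>l. Gamma (real l / 2 + \<zeta>/4) / (fact l * Gamma (real l / 2 + 3/4))
            * (- (v^2) / (2 * sqrt \<alpha>)) ^ l)"

definition s_coef :: "nat \<Rightarrow> real" where
  "s_coef l = (cos (real l * pi / 4) + sin (real l * pi / 4)) * cos (real l * pi / 4) / sqrt 2"

definition Omega1 :: "real \<Rightarrow> real \<Rightarrow> real \<Rightarrow> real" where
  "Omega1 \<alpha> \<zeta> v = v * sqrt (pi / 2) / Gamma ((\<zeta> + 1)/4) *
     (\<Sum>l. Gamma ((real l + 1 + \<zeta>)/4) * s_coef l / (Gamma (real l / 4 + 1) * Gamma ((real l + 3)/2))
            * (- v / ((4 * \<alpha>) powr (1/4))) ^ l)"

definition f1 :: "real \<Rightarrow> real \<Rightarrow> real \<Rightarrow> real" where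
  "f1 \<alpha> \<zeta> v = hyp1F2 (\<zeta>/4) (1/2) (3/4) (v^4 / (16 * \<alpha>))"

definition f2 :: "real \<Rightarrow> real \<Rightarrow> real \<Rightarrow> real" where
  "f2 \<alpha> \<zeta> v = v * hyp1F2 ((\<zeta>+1)/4) (3/4) (5/4) (v^4 / (16 * \<alpha>))"

definition f3 :: "real \<Rightarrow> real \<Rightarrow> real \<Rightarrow> real" where
  "f3 \<alpha> \<zeta> v = v^2 * hyp1F2 ((\<zeta>+2)/4) (5/4) (3/2) (v^4 / (16 * \<alpha>))"

definition solves_ODE :: "real \<Rightarrow> real \<Rightarrow> (real \<Rightarrow> real) \<Rightarrow> bool" where
  "solves_ODE \<alpha> \<zeta> f \<longleftrightarrow>
     (\<exists>d1 d2 d3. (\<forall>v. (f has_real_derivative d1 v) (at v)) \<and>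
                 (\<forall>v. (d1 has_real_derivative d2 v) (at v)) \<and>
                 (\<forall>v. (d2 has_real_derivative d3 v) (at v)) \<and>
                 (\<forall>v. \<alpha> * d3 v - v^2 * d1 v - \<zeta> * v * f v = 0))"

end

theory Submission
  imports Defs
begin


definition hc :: "real \<Rightarrow> real \<Rightarrow> real \<Rightarrow> nat \<Rightarrow> real" where
  "hc a b1 b2 n = pochhammer a n / (pochhammer b1 n * pochhammer b2 n * fact n)"

lemma hyp_eq: "hyp1F2 a b1 b2 z = (\<Sum>n. hc a b1 b2 n * z^n)"
  unfolding hyp1F2_def hc_def by simp

lemma hc_Suc:
  assumes "b1 > 0" "b2 > 0"
  shows "hc a b1 b2 (Suc n) = hc a b1 b2 n * ((a + n) / ((b1+n)*(b2+n)*(n+1)))"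
proof -
  have p: "pochhammer b1 n > 0" "pochhammer b2 n > 0" using assms by (auto intro: pochhammer_pos)
  have q: "b1 + n > 0" "b2 + n > 0" using assms by auto
  have f: "fact (Suc n) = (real n + 1) * fact n" by (simp add: fact_Suc algebra_simps)
  have "hc a b1 b2 (Suc n) = (pochhammer a n * (a + n)) / ((pochhammer b1 n * (b1 + n)) * (pochhammer b2 n * (b2+n)) * ((real n + 1) * fact n))"
    unfolding hc_def f by (simp add: pochhammer_rec' mult.commute)
  also have "\<dots> = hc a b1 b2 n * ((a + n) / ((b1+n)*(b2+n)*(n+1)))"
    unfolding hc_def by (simp add: divide_simps)
  finally show ?thesis .
qed

lemma hc_pos: "a > 0 \<Longrightarrow> b1 > 0 \<Longrightarrow> b2 > 0 \<Longrightarrow> hc a b1 b2 n > 0"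
  unfolding hc_def by (auto intro!: divide_pos_pos mult_pos_pos pochhammer_pos)

lemma hyp_summable:
  assumes a: "a > 0" and b1: "b1 > 0" and b2: "b2 > 0"
  shows "summable (\<lambda>n. hc a b1 b2 n * z^n)"
proof (rule summable_ratio_test[where c = "1/2" and N = "nat \<lceil>2 * \<bar>z\<bar> * (1 + a/b1) / b2\<rceil>"])
  fix n assume n: "n \<ge> nat \<lceil>2 * \<bar>z\<bar> * (1 + a/b1) / b2\<rceil>"
  define M where "M = 1 + a/b1"
  have M: "M > 0" using a b1 unfolding M_def by (smt (verit) divide_pos_pos)
  have n': "2 * \<bar>z\<bar> * M / b2 \<le> real n" using n unfolding M_def by linarith
  have h: "hc a b1 b2 n > 0" using hc_pos a b1 b2 by blast
  have r1: "a + n \<le> M * (b1 + n)" unfolding M_def using a b1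
    by (simp add: field_simps)
  have r2: "b2 * (n+1) \<le> (b2+n)*(n+1)" using b2 by simp
  have "\<bar>z\<bar> * (a + n) \<le> \<bar>z\<bar> * (M * (b1+n))" using r1 by (simp add: mult_left_mono)
  also have "\<dots> = (b1 + n) * (\<bar>z\<bar> * M)" by simp
  also have "\<dots> \<le> (b1 + n) * (1/2 * (b2 * (n+1)))"
  proof (rule mult_left_mono)
    have "2 * \<bar>z\<bar> * M \<le> b2 * real n" using n' b2 by (simp add: field_simps)
    then show "\<bar>z\<bar> * M \<le> 1/2 * (b2 * (n+1))" using b2 by (auto simp: algebra_simps)
  qed (use b1 in auto)
  also have "\<dots> \<le> (b1 + n) * (1/2 * ((b2+n)*(n+1)))" using r2 b1
    by (intro mult_left_mono) auto
  finally have key0: "\<bar>z\<bar> * (a + n) \<le> (b1 + n) * (1/2 * ((b2+n)*(n+1)))" .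
  then have key: "\<bar>z\<bar> * (a + n) \<le> 1/2 * ((b1+n)*(b2+n)*(n+1))" by (simp add: mult_ac)
  have pos: "(b1+n)*(b2+n)*(n+1) > 0" using b1 b2 by simp
  define q where "q = (a + n) / ((b1+n)*(b2+n)*(n+1))"
  have q0: "q \<ge> 0" unfolding q_def using a pos by simp
  have qb: "\<bar>z\<bar> * q \<le> 1/2" unfolding q_def using key pos by (simp add: divide_simps)
  have "norm (hc a b1 b2 (Suc n) * z ^ Suc n) = (hc a b1 b2 n * \<bar>z\<bar>^n) * (\<bar>z\<bar> * q)"
    using hc_Suc[OF b1 b2, of a n] h q0 unfolding q_def[symmetric]
    by (simp add: abs_mult power_abs)
  also have "\<dots> \<le> (hc a b1 b2 n * \<bar>z\<bar>^n) * (1/2)"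
    using qb h by (intro mult_left_mono) auto
  also have "\<dots> = 1/2 * norm (hc a b1 b2 n * z ^ n)" using h by (simp add: abs_mult power_abs)
  finally show "norm (hc a b1 b2 (Suc n) * z ^ Suc n) \<le> 1/2 * norm (hc a b1 b2 n * z ^ n)" .
qed simp

definition pc :: "real \<Rightarrow> real \<Rightarrow> real \<Rightarrow> real \<Rightarrow> nat \<Rightarrow> nat \<Rightarrow> real" where
  "pc a b1 b2 \<beta> r n = (if n mod 4 = r then hc a b1 b2 (n div 4) * \<beta>^(n div 4) else 0)"

lemma pc_sums:
  assumes a: "a > 0" and b1: "b1 > 0" and b2: "b2 > 0" and r: "r < 4"
  shows "(\<lambda>n. pc a b1 b2 \<beta> r n * v^n) sums (v^r * hyp1F2 a b1 b2 (\<beta> * v^4))"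
proof -
  have sm: "(\<lambda>k. hc a b1 b2 k * (\<beta> * v^4)^k) sums hyp1F2 a b1 b2 (\<beta> * v^4)"
    unfolding hyp_eq using hyp_summable[OF a b1 b2] by (rule summable_sums)
  have "(\<lambda>k. v^r * (hc a b1 b2 k * (\<beta> * v^4)^k)) sums (v^r * hyp1F2 a b1 b2 (\<beta> * v^4))"
    by (rule sums_mult[OF sm])
  moreover have "v^r * (hc a b1 b2 k * (\<beta> * v^4)^k) = pc a b1 b2 \<beta> r (4*k+r) * v^(4*k+r)" for k
  proof -
    have m: "(4*k+r) mod 4 = r" "(4*k+r) div 4 = k" using r by auto
    show ?thesis unfolding pc_def m by (simp add: power_add power_mult_distrib power_mult)
  qed
  ultimately have "(\<lambda>k. (\<lambda>n. pc a b1 b2 \<beta> r n * v^n) (4*k+r)) sums (v^r * hyp1F2 a b1 b2 (\<beta> * v^4))"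
    by simp
  moreover have "strict_mono (\<lambda>k::nat. 4*k+r)" by (auto simp: strict_mono_def)
  moreover have "pc a b1 b2 \<beta> r n * v ^ n = 0" if "n \<notin> range (\<lambda>k::nat. 4*k+r)" for n
  proof -
    have "n mod 4 \<noteq> r"
    proof
      assume "n mod 4 = r"
      then have "n = 4*(n div 4) + r" using div_mult_mod_eq[of n 4] by linarith
      then have "n \<in> range (\<lambda>k::nat. 4*k+r)" by blast
      then show False using that by blast
    qed
    then show ?thesis by (simp add: pc_def)
  qed
  ultimately show ?thesis using sums_mono_reindex[of "\<lambda>k::nat. 4*k+r" "\<lambda>n. pc a b1 b2 \<beta> r n * v^n"]
    by blast
qed



lemma shift_sums:
  fixes c :: "nat \<Rightarrow> real"
  assumes "(\<lambda>n. c n * v^n) sums s"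
  shows "(\<lambda>n. (if n = 0 then 0 else c (n-1)) * v^n) sums (v * s)"
proof -
  define h where "h n = (if n = 0 then 0 else c (n-1)) * v^n" for n
  have "(\<lambda>n. v * (c n * v^n)) sums (v * s)" by (rule sums_mult[OF assms])
  moreover have "(\<lambda>n. v * (c n * v^n)) = (\<lambda>n. h (Suc n))" by (auto simp: h_def fun_eq_iff)
  ultimately have "(\<lambda>n. h (Suc n)) sums (v * s)" by simp
  then have "h sums (v * s + h 0)" by (simp add: sums_Suc_iff)
  then show ?thesis by (simp add: h_def[abs_def])
qed

lemma diffs3: "diffs (diffs (diffs c)) n = (real (Suc n) * real (Suc (Suc n)) * real (Suc (Suc (Suc n)))) * (c (n+3) :: real)"
  by (simp add: diffs_def numeral_3_eq_3)

lemma ode_powser: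
  fixes c :: "nat \<Rightarrow> real"
  assumes summ: "\<And>y. summable (\<lambda>n. c n * y^n)"
    and rec: "\<And>n. \<alpha> * (real (Suc n) * real (Suc (Suc n)) * real (Suc (Suc (Suc n))) * c (n+3))
                 = (if n = 0 then 0 else (real n - 1 + \<zeta>) * c (n - 1))"
  shows "solves_ODE \<alpha> \<zeta> (\<lambda>v. \<Sum>n. c n * v^n)"
proof -
  have s1: "\<And>y. summable (\<lambda>n. diffs c n * y^n)" by (rule termdiff_converges_all[OF summ])
  have s2: "\<And>y. summable (\<lambda>n. diffs (diffs c) n * y^n)" by (rule termdiff_converges_all[OF s1])
  have s3: "\<And>y. summable (\<lambda>n. diffs (diffs (diffs c)) n * y^n)" by (rule termdiff_converges_all[OF s2])
  define f where "f v = (\<Sum>n. c n * v^n)" for v :: real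
  define d1 where "d1 v = (\<Sum>n. diffs c n * v^n)" for v :: real
  define d2 where "d2 v = (\<Sum>n. diffs (diffs c) n * v^n)" for v :: real
  define d3 where "d3 v = (\<Sum>n. diffs (diffs (diffs c)) n * v^n)" for v :: real
  have D1: "(f has_real_derivative d1 v) (at v)" for v
    unfolding f_def[abs_def] d1_def by (rule termdiffs_strong_converges_everywhere[OF summ])
  have D2: "(d1 has_real_derivative d2 v) (at v)" for v
    unfolding d1_def[abs_def] d2_def by (rule termdiffs_strong_converges_everywhere[OF s1])
  have D3: "(d2 has_real_derivative d3 v) (at v)" for v
    unfolding d2_def[abs_def] d3_def by (rule termdiffs_strong_converges_everywhere[OF s2])
  have E: "\<alpha> * d3 v - v^2 * d1 v - \<zeta> * v * f v = 0" for v
  proof -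
    have S0: "(\<lambda>n. c n * v^n) sums f v" unfolding f_def using summ by (rule summable_sums)
    have S1: "(\<lambda>n. diffs c n * v^n) sums d1 v" unfolding d1_def using s1 by (rule summable_sums)
    have S3: "(\<lambda>n. diffs (diffs (diffs c)) n * v^n) sums d3 v" unfolding d3_def using s3 by (rule summable_sums)
    define e1 where "e1 n = (if n = 0 then 0 else diffs c (n-1))" for n
    define e2 where "e2 n = (if n = 0 then 0 else e1 (n-1))" for n
    define e0 where "e0 n = (if n = 0 then 0 else c (n-1))" for n
    have T1: "(\<lambda>n. e1 n * v^n) sums (v * d1 v)" unfolding e1_def by (rule shift_sums[OF S1])
    have T2: "(\<lambda>n. e2 n * v^n) sums (v * (v * d1 v))" unfolding e2_def by (rule shift_sums[OF T1])
    have T0: "(\<lambda>n. e0 n * v^n) sums (v * f v)" unfolding e0_def by (rule shift_sums[OF S0])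
    have "(\<lambda>n. \<alpha> * (diffs (diffs (diffs c)) n * v^n) - e2 n * v^n - \<zeta> * (e0 n * v^n))
           sums (\<alpha> * d3 v - v * (v * d1 v) - \<zeta> * (v * f v))"
      by (intro sums_diff sums_mult S3 T2 T0)
    moreover have "\<alpha> * (diffs (diffs (diffs c)) n * v^n) - e2 n * v^n - \<zeta> * (e0 n * v^n) = 0" for n
    proof -
      have "\<alpha> * diffs (diffs (diffs c)) n = e2 n + \<zeta> * e0 n"
      proof (cases n)
        case 0
        then show ?thesis using rec[of 0] unfolding diffs3 by (simp add: e2_def e0_def)
      next
        case (Suc m)
        note rn = rec[of n]
        show ?thesis
        proof (cases m)
          case 0
          then show ?thesis using rn Suc unfolding diffs3 by (simp add: e2_def e1_def e0_def)
        next
          case (Suc k)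
          then show ?thesis using rn \<open>n = Suc m\<close> unfolding diffs3
            by (simp add: e2_def e1_def e0_def diffs_def algebra_simps)
        qed
      qed
      then have "(\<alpha> * diffs (diffs (diffs c)) n) * v^n = (e2 n + \<zeta> * e0 n) * v^n" by simp
      then show ?thesis by (simp add: algebra_simps)
    qed
    ultimately have "(\<lambda>n. 0::real) sums (\<alpha> * d3 v - v * (v * d1 v) - \<zeta> * (v * f v))" by simp
    then have "\<alpha> * d3 v - v * (v * d1 v) - \<zeta> * (v * f v) = 0" using sums_unique sums_0 by fastforce
    then show ?thesis by (simp add: power2_eq_square algebra_simps)
  qed
  show ?thesis unfolding solves_ODE_def f_def[symmetric]
    using D1 D2 D3 E by blast
qed


lemma pc_rec:
  fixes a b1 b2 :: real
  assumes al: "\<alpha> > 0" and b1: "b1 > 0" and b2: "b2 > 0" and r: "r < 3"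
    and ha: "4 * a = \<zeta> + real r"
    and hp: "\<And>k::nat. 64 * ((b1 + k) * (b2 + k) * (k + 1)) = (4*k+r+2) * (4*k+r+3) * (4*k+r+4)"
  shows "\<alpha> * (real (Suc n) * real (Suc (Suc n)) * real (Suc (Suc (Suc n))) * pc a b1 b2 (1/(16*\<alpha>)) r (n+3))
                 = (if n = 0 then 0 else (real n - 1 + \<zeta>) * pc a b1 b2 (1/(16*\<alpha>)) r (n - 1))"
proof (cases n)
  case 0
  then show ?thesis using r by (simp add: pc_def)
next
  case (Suc m)
  have nm: "n + 3 = m + 4" "n - 1 = m" using Suc by auto
  have md: "(m+4) mod 4 = m mod 4" "(m+4) div 4 = m div 4 + 1" by auto
  show ?thesis
  proof (cases "m mod 4 = r")
    case False
    then show ?thesis unfolding nm by (simp add: pc_def md Suc)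
  next
    case True
    define k where "k = m div 4"
    have mk: "m = 4*k + r" unfolding k_def using True div_mult_mod_eq[of m 4] by linarith
    define \<beta> where "\<beta> = 1/(16*\<alpha>)"
    have P: "(b1+k)*(b2+k)*(k+1) > 0" using b1 b2 by simp
    have L0: "real (Suc n) * real (Suc (Suc n)) * real (Suc (Suc (Suc n))) = (4*real k+real r+2) * (4*real k+real r+3) * (4*real k+real r+4)"
      unfolding Suc mk by (simp add: algebra_simps)
    have L1: "real (Suc n) * real (Suc (Suc n)) * real (Suc (Suc (Suc n))) = 64 * ((b1 + k) * (b2 + k) * (real k + 1))"
      using L0 hp[of k] by linarith
    have L: "real (Suc n) * real (Suc (Suc n)) * real (Suc (Suc (Suc n))) = 64 * ((b1 + k) * (b2 + k) * (k + 1))"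
      using L1 by simp
    have "\<alpha> * (real (Suc n) * real (Suc (Suc n)) * real (Suc (Suc (Suc n))) * pc a b1 b2 \<beta> r (n+3))
        = \<alpha> * (64 * ((b1 + k) * (b2 + k) * (k + 1)) * (hc a b1 b2 k * ((a + k) / ((b1+k)*(b2+k)*(k+1))) * (\<beta>^k * \<beta>)))"
      unfolding L nm pc_def md True k_def[symmetric] using hc_Suc[OF b1 b2, of a k] by simp
    also have "\<dots> = (\<alpha> * 64 * \<beta>) * (((b1+k)*(b2+k)*(k+1)) * ((a + k) / ((b1+k)*(b2+k)*(k+1)))) * hc a b1 b2 k * \<beta>^k"
      by (simp only: mult_ac)
    also have "((b1+k)*(b2+k)*(k+1)) * ((a + k) / ((b1+k)*(b2+k)*(k+1))) = a + k"
    proof -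
      have "(b1+k)*(b2+k)*(k+1) \<noteq> 0" using P by linarith
      then show ?thesis unfolding times_divide_eq_right by (rule nonzero_mult_div_cancel_left)
    qed
    also have "\<alpha> * 64 * \<beta> = 4" unfolding \<beta>_def using al by simp
    also have "4 * (a + k) * hc a b1 b2 k * \<beta>^k = (real n - 1 + \<zeta>) * (hc a b1 b2 k * \<beta>^k)"
    proof -
      have "real n - 1 + \<zeta> = 4*a + 4*k" using ha Suc mk by simp
      then show ?thesis by (simp add: algebra_simps)
    qed
    also have "hc a b1 b2 k * \<beta>^k = pc a b1 b2 \<beta> r (n - 1)"
      unfolding nm pc_def using True k_def by simp
    finally show ?thesis using Suc unfolding \<beta>_def by simp
  qed
qed

lemma f_solves:
  fixes a b1 b2 :: real
  assumes al: "\<alpha> > 0" and a: "a > 0" and b1: "b1 > 0" and b2: "b2 > 0" and r: "r < 3"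
    and ha: "4 * a = \<zeta> + real r"
    and hp: "\<And>k::nat. 64 * ((b1 + k) * (b2 + k) * (k + 1)) = (4*k+r+2) * (4*k+r+3) * (4*k+r+4)"
  shows "solves_ODE \<alpha> \<zeta> (\<lambda>v. v^r * hyp1F2 a b1 b2 (v^4 / (16*\<alpha>)))"
proof -
  have S: "(\<lambda>n. pc a b1 b2 (1/(16*\<alpha>)) r n * v^n) sums (v^r * hyp1F2 a b1 b2 (v^4 / (16*\<alpha>)))" for v
    using pc_sums[OF a b1 b2, of r "1/(16*\<alpha>)" v] r by simp
  have eq: "(\<lambda>v. v^r * hyp1F2 a b1 b2 (v^4 / (16*\<alpha>))) = (\<lambda>v. \<Sum>n. pc a b1 b2 (1/(16*\<alpha>)) r n * v^n)"
    using S sums_unique by blast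
  show ?thesis unfolding eq
    by (rule ode_powser[OF sums_summable[OF S] pc_rec[OF al b1 b2 r ha hp]])
qed


lemma Gpoch: "(x::real) > 0 \<Longrightarrow> Gamma (x + real k) = Gamma x * pochhammer x k"
proof -
  assume x: "x > 0"
  then have "x \<notin> \<int>\<^sub>\<le>\<^sub>0" using nonpos_Ints_nonpos by fastforce
  then have "pochhammer x k = Gamma (x + of_nat k) / Gamma x" by (rule pochhammer_Gamma)
  moreover have "Gamma x > 0" using x by simp
  ultimately show ?thesis by simp
qed

lemma Gplus1: "(x::real) > 0 \<Longrightarrow> Gamma (x + 1) = x * Gamma x"
  using Gpoch[of x 1] by simp

lemma fact_odd: "fact (2*k+1) = (4::real)^k * fact k * pochhammer (3/2) k"
proof -
  have a: "pochhammer (1/2::real) (Suc k) = (1/2 + k) * pochhammer (1/2) k" by (rule pochhammer_rec')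
  have b: "pochhammer (1/2::real) (Suc k) = 1/2 * pochhammer (3/2) k" by (simp add: pochhammer_rec)
  have "fact (2*k+1) = (2*real k + 1) * (fact (2*k) :: real)" by (simp add: algebra_simps)
  also have "\<dots> = (2*real k + 1) * (2 ^ (2 * k) * pochhammer (1 / 2) k * fact k)" by (simp add: fact_double)
  also have "\<dots> = 2 ^ (2 * k) * fact k * (2 * ((1/2 + k) * pochhammer (1 / 2) k))" by (simp add: algebra_simps)
  also have "\<dots> = 2 ^ (2 * k) * fact k * pochhammer (3/2) k" unfolding a[symmetric] b by simp
  also have "(2::real) ^ (2 * k) = 4^k" by (simp add: power_mult)
  finally show ?thesis .
qed

lemma s_coef_eq: "s_coef (4*k+j) = (cos (real j*pi/4) + sin (real j*pi/4)) * cos (real j*pi/4) / sqrt 2"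
proof -
  have th: "real (4*k+j) * pi / 4 = real k * pi + real j * pi / 4" by (simp add: field_simps)
  have c: "cos (real k * pi + real j * pi / 4) = (-1)^k * cos (real j*pi/4)" by (simp add: cos_add)
  have s: "sin (real k * pi + real j * pi / 4) = (-1)^k * sin (real j*pi/4)" by (simp add: sin_add)
  have "((-1::real)^k) * (-1)^k = 1" by (simp flip: power_add)
  then show ?thesis unfolding s_coef_def th c s
    by (simp add: algebra_simps)
qed

lemma s_coef0: "s_coef (4*k) = 1 / sqrt 2"
  using s_coef_eq[of k 0] by simp
lemma s_coef1: "s_coef (4*k+1) = 1 / sqrt 2"
proof -
  have "(sqrt 2 / 2 + sqrt 2 / 2) * (sqrt 2 / 2) / sqrt 2 = 1 / sqrt (2::real)"
    by (simp add: field_simps)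
  then show ?thesis using s_coef_eq[of k 1] by (simp add: cos_45 sin_45)
qed
lemma s_coef2: "s_coef (4*k+2) = 0"
  using s_coef_eq[of k 2] by simp
lemma s_coef3: "s_coef (4*k+3) = 0"
proof -
  have e: "3 * pi / 4 = pi - pi/4" by simp
  have "cos (3*pi/4) = - cos (pi/4)" "sin (3*pi/4) = sin (pi/4)" unfolding e by (rule cos_pi_minus, rule sin_pi_minus)
  then show ?thesis using s_coef_eq[of k 3] by (simp add: sin_45 cos_45)
qed

lemma sums_split_mod:
  fixes t :: "nat \<Rightarrow> real"
  assumes m: "m > 0" and h: "\<And>j. j < m \<Longrightarrow> (\<lambda>k. t (m*k+j)) sums A j"
  shows "t sums (\<Sum>j<m. A j)"
proof -
  define u where "u j l = (if l mod m = j then t l else 0)" for j l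
  have "u j sums A j" if j: "j < m" for j
  proof -
    have "(\<lambda>k. u j (m*k+j)) = (\<lambda>k. t (m*k+j))" using j by (auto simp: u_def fun_eq_iff)
    then have "(\<lambda>k. u j (m*k+j)) sums A j" using h[OF j] by simp
    moreover have "strict_mono (\<lambda>k::nat. m*k+j)" using m by (auto simp: strict_mono_def)
    moreover have "u j l = 0" if "l \<notin> range (\<lambda>k::nat. m*k+j)" for l
    proof (rule ccontr)
      assume "u j l \<noteq> 0"
      then have "l mod m = j" by (auto simp: u_def split: if_splits)
      then have "l = m*(l div m) + j" using div_mult_mod_eq[of l m] by (simp add: mult.commute)
      then show False using that by blast
    qed
    ultimately show ?thesis using sums_mono_reindex[of "\<lambda>k::nat. m*k+j" "u j"] by blast
  qed
  then have "(\<lambda>l. \<Sum>j<m. u j l) sums (\<Sum>j<m. A j)" by (intro sums_sum) auto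
  moreover have "(\<Sum>j<m. u j l) = t l" for l
    unfolding u_def using m by simp
  ultimately show ?thesis by simp
qed


lemma hyp_sums: "a > 0 \<Longrightarrow> b1 > 0 \<Longrightarrow> b2 > 0 \<Longrightarrow> (\<lambda>k. hc a b1 b2 k * w^k) sums hyp1F2 a b1 b2 w"
  unfolding hyp_eq by (rule summable_sums[OF hyp_summable])

lemma Omega0_eq:
  assumes al: "\<alpha> > 0" and ze: "\<zeta> > 0"
  shows "Omega0 \<alpha> \<zeta> v = f1 \<alpha> \<zeta> v
             - 2 * Gamma (3/4) * Gamma ((\<zeta>+2)/4) / (sqrt \<alpha> * Gamma (1/4) * Gamma (\<zeta>/4)) * f3 \<alpha> \<zeta> v"
proof -
  define x where "x = - (v^2) / (2 * sqrt \<alpha>)"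
  define w where "w = v^4 / (16 * \<alpha>)"
  define t where "t l = Gamma (real l / 2 + \<zeta>/4) / (fact l * Gamma (real l / 2 + 3/4)) * x ^ l" for l
  have sa: "sqrt \<alpha> > 0" "sqrt \<alpha> ^ 2 = \<alpha>" using al by auto
  have x2: "x^2 = 4 * w" unfolding x_def w_def using sa al by (simp add: field_simps power2_eq_square) (simp add: power2_eq_square[symmetric] power4_eq_xxxx)
  have g34: "Gamma (3/4::real) > 0" and gz: "Gamma (\<zeta>/4) > 0" and g14: "Gamma (1/4::real) > 0"
    and gz2: "Gamma ((\<zeta>+2)/4) > 0" using ze by auto
  have g54: "Gamma (5/4::real) = 1/4 * Gamma (1/4)" using Gplus1[of "1/4"] by simp
  have even: "t (2*k) = Gamma (\<zeta>/4) / Gamma (3/4) * (hc (\<zeta>/4) (1/2) (3/4) k * w^k)" for k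
  proof -
    have e1: "Gamma (real (2*k) / 2 + \<zeta>/4) = Gamma (\<zeta>/4) * pochhammer (\<zeta>/4) k"
      using Gpoch[of "\<zeta>/4" k] ze by (simp add: add.commute)
    have e2: "Gamma (real (2*k) / 2 + 3/4) = Gamma (3/4) * pochhammer (3/4) k"
      using Gpoch[of "3/4" k] by (simp add: add.commute)
    have e3: "fact (2*k) = (4::real)^k * pochhammer (1/2) k * fact k"
      by (simp add: fact_double power_mult)
    have e4: "x^(2*k) = 4^k * w^k" by (simp add: power_mult x2 power_mult_distrib)
    have p: "pochhammer (1/2::real) k > 0" "pochhammer (3/4::real) k > 0" by (auto intro!: pochhammer_pos)
    show ?thesis unfolding t_def e1 e2 e3 e4 hc_def using p g34 gz
      by (simp add: field_simps)
  qed
  have odd: "t (2*k+1) = 4 * Gamma ((\<zeta>+2)/4) / Gamma (1/4) * x * (hc ((\<zeta>+2)/4) (5/4) (3/2) k * w^k)" for k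
  proof -
    have o1: "Gamma (real (2*k+1) / 2 + \<zeta>/4) = Gamma ((\<zeta>+2)/4) * pochhammer ((\<zeta>+2)/4) k"
    proof -
      have "real (2*k+1) / 2 + \<zeta>/4 = (\<zeta>+2)/4 + real k" by (simp add: field_simps)
      then show ?thesis using Gpoch[of "(\<zeta>+2)/4" k] ze by simp
    qed
    have o2: "Gamma (real (2*k+1) / 2 + 3/4) = 1/4 * Gamma (1/4) * pochhammer (5/4) k"
    proof -
      have "real (2*k+1) / 2 + 3/4 = 5/4 + real k" by (simp add: field_simps)
      then show ?thesis using Gpoch[of "5/4" k] g54 by simp
    qed
    have o4: "x^(2*k+1) = x * (4^k * w^k)" by (simp add: power_mult x2 power_mult_distrib)
    have p: "pochhammer (3/2::real) k > 0" "pochhammer (5/4::real) k > 0" by (auto intro!: pochhammer_pos)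
    show ?thesis unfolding t_def o1 o2 fact_odd o4 hc_def using p g14 gz2
      by (simp add: field_simps)
  qed
  have S: "t sums (\<Sum>j<(2::nat). (if j = 0 then Gamma (\<zeta>/4) / Gamma (3/4) * hyp1F2 (\<zeta>/4) (1/2) (3/4) w
                          else 4 * Gamma ((\<zeta>+2)/4) / Gamma (1/4) * x * hyp1F2 ((\<zeta>+2)/4) (5/4) (3/2) w))"
  proof (rule sums_split_mod)
    fix j :: nat assume "j < 2"
    then consider "j = 0" | "j = 1" by linarith
    then show "(\<lambda>k. t (2*k+j)) sums (if j = 0 then Gamma (\<zeta>/4) / Gamma (3/4) * hyp1F2 (\<zeta>/4) (1/2) (3/4) w
                          else 4 * Gamma ((\<zeta>+2)/4) / Gamma (1/4) * x * hyp1F2 ((\<zeta>+2)/4) (5/4) (3/2) w)"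
    proof cases
      case 1
      have "(\<lambda>k. Gamma (\<zeta>/4) / Gamma (3/4) * (hc (\<zeta>/4) (1/2) (3/4) k * w^k)) sums (Gamma (\<zeta>/4) / Gamma (3/4) * hyp1F2 (\<zeta>/4) (1/2) (3/4) w)"
        using hyp_sums[of "\<zeta>/4" "1/2" "3/4" w] ze by (intro sums_mult) simp
      then show ?thesis using 1 by (simp only: even add_0_right) simp
    next
      case 2
      have "(\<lambda>k. 4 * Gamma ((\<zeta>+2)/4) / Gamma (1/4) * x * (hc ((\<zeta>+2)/4) (5/4) (3/2) k * w^k)) sums (4 * Gamma ((\<zeta>+2)/4) / Gamma (1/4) * x * hyp1F2 ((\<zeta>+2)/4) (5/4) (3/2) w)"
        using hyp_sums[of "(\<zeta>+2)/4" "5/4" "3/2" w] ze by (intro sums_mult) simp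
      then show ?thesis using 2 by (simp only: odd) simp
    qed
  qed simp
  have "Omega0 \<alpha> \<zeta> v = Gamma (3/4) / Gamma (\<zeta>/4) * suminf t"
    unfolding Omega0_def t_def x_def by simp
  also have "suminf t = Gamma (\<zeta>/4) / Gamma (3/4) * hyp1F2 (\<zeta>/4) (1/2) (3/4) w
                 + 4 * Gamma ((\<zeta>+2)/4) / Gamma (1/4) * x * hyp1F2 ((\<zeta>+2)/4) (5/4) (3/2) w"
    using sums_unique[OF S] by (simp add: numeral_2_eq_2)
  finally have O: "Omega0 \<alpha> \<zeta> v = Gamma (3/4) / Gamma (\<zeta>/4) * (Gamma (\<zeta>/4) / Gamma (3/4) * hyp1F2 (\<zeta>/4) (1/2) (3/4) w)
     + Gamma (3/4) / Gamma (\<zeta>/4) * (4 * Gamma ((\<zeta>+2)/4) / Gamma (1/4) * x * hyp1F2 ((\<zeta>+2)/4) (5/4) (3/2) w)"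
    by (simp add: distrib_left)
  have c1: "Gamma (3/4) / Gamma (\<zeta>/4) * (Gamma (\<zeta>/4) / Gamma (3/4) * hyp1F2 (\<zeta>/4) (1/2) (3/4) w) = hyp1F2 (\<zeta>/4) (1/2) (3/4) w"
  proof -
    have "Gamma (3/4::real) \<noteq> 0" "Gamma (\<zeta>/4) \<noteq> 0" using g34 gz by linarith+
    then show ?thesis by (simp add: field_simps)
  qed
  have c2: "Gamma (3/4) / Gamma (\<zeta>/4) * (4 * Gamma ((\<zeta>+2)/4) / Gamma (1/4) * x * hyp1F2 ((\<zeta>+2)/4) (5/4) (3/2) w)
      = - (2 * Gamma (3/4) * Gamma ((\<zeta>+2)/4) / (sqrt \<alpha> * Gamma (1/4) * Gamma (\<zeta>/4))) * (v^2 * hyp1F2 ((\<zeta>+2)/4) (5/4) (3/2) w)"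
    unfolding x_def using sa g14 gz by (simp add: field_simps)
  show ?thesis unfolding O c1 c2 f1_def f3_def w_def[symmetric] by simp
qed

lemma four_powr: "(4::real) powr (1/4) = sqrt 2"
proof -
  have "(4::real) = 2 powr 2" by simp
  then have "(4::real) powr (1/4) = 2 powr (2 * (1/4))" by (metis powr_powr)
  also have "\<dots> = sqrt 2" by (simp add: powr_half_sqrt)
  finally show ?thesis .
qed

lemma Omega1_eq:
  assumes al: "\<alpha> > 0" and ze: "\<zeta> > 0"
  shows "Omega1 \<alpha> \<zeta> v = f2 \<alpha> \<zeta> v
             - sqrt (2 * pi) * Gamma ((\<zeta>+2)/4) / (\<alpha> powr (1/4) * Gamma (1/4) * Gamma ((\<zeta>+1)/4)) * f3 \<alpha> \<zeta> v"
proof -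
  define q where "q = (4 * \<alpha>) powr (1/4)"
  define y where "y = - v / q"
  define w where "w = v^4 / (16 * \<alpha>)"
  define t where "t l = Gamma ((real l + 1 + \<zeta>)/4) * s_coef l / (Gamma (real l / 4 + 1) * Gamma ((real l + 3)/2)) * y ^ l" for l
  have q0: "q > 0" unfolding q_def using al by simp
  have q4: "q^4 = 4 * \<alpha>" unfolding q_def using al by (simp add: powr_power)
  have y4: "y^4 = 4 * w" unfolding y_def w_def using q4 q0 al by (simp add: power_divide field_simps)
  have g14: "Gamma (1/4::real) > 0" and gz1: "Gamma ((\<zeta>+1)/4) > 0"
    and gz2: "Gamma ((\<zeta>+2)/4) > 0" using ze by auto
  have g54: "Gamma (5/4::real) = 1/4 * Gamma (1/4)" using Gplus1[of "1/4"] by simp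
  have g32: "Gamma (3/2::real) = 1/2 * sqrt pi" using Gplus1[of "1/2"] by (simp add: Gamma_one_half_real)
  have r0: "t (4*k) = Gamma ((\<zeta>+1)/4) / sqrt 2 * 2 / sqrt pi * (hc ((\<zeta>+1)/4) (3/4) (5/4) k * w^k)" for k
  proof -
    have e1: "Gamma ((real (4*k) + 1 + \<zeta>)/4) = Gamma ((\<zeta>+1)/4) * pochhammer ((\<zeta>+1)/4) k"
    proof -
      have eq: "(real (4*k) + 1 + \<zeta>)/4 = (\<zeta>+1)/4 + real k" by (simp add: field_simps)
      show ?thesis unfolding eq using Gpoch[of "(\<zeta>+1)/4" k] ze by simp
    qed
    have e2: "Gamma (real (4*k) / 4 + 1) = fact k"
      using Gamma_fact[of k] by (simp add: add.commute)
    have e3: "Gamma ((real (4*k) + 3)/2) = 1/2 * sqrt pi * ((4::real)^k * pochhammer (3/4) k * pochhammer (5/4) k)"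
    proof -
      have eq: "(real (4*k) + 3)/2 = 3/2 + real (2*k)" by (simp add: field_simps)
      have "Gamma ((real (4*k) + 3)/2) = Gamma (3/2) * pochhammer (3/2) (2*k)"
        unfolding eq using Gpoch[of "3/2" "2*k"] by simp
      moreover have "pochhammer (3/2::real) (2*k) = 4^k * pochhammer (3/4) k * pochhammer (5/4) k"
        using pochhammer_double[of "3/4::real" k] by (simp add: power_mult)
      ultimately show ?thesis using g32 by simp
    qed
    have e4: "y^(4*k) = 4^k * w^k" by (simp add: power_mult y4 power_mult_distrib)
    have p: "pochhammer (3/4::real) k > 0" "pochhammer (5/4::real) k > 0" by (auto intro!: pochhammer_pos)
    have sp: "sqrt pi > 0" by simp
    show ?thesis unfolding t_def e1 e2 e3 e4 hc_def s_coef0 using p gz1 sp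
      by (simp add: field_simps)
  qed
  have r1: "t (4*k+1) = Gamma ((\<zeta>+2)/4) / sqrt 2 * 4 / Gamma (1/4) * y * (hc ((\<zeta>+2)/4) (5/4) (3/2) k * w^k)" for k
  proof -
    have o1: "Gamma ((real (4*k+1) + 1 + \<zeta>)/4) = Gamma ((\<zeta>+2)/4) * pochhammer ((\<zeta>+2)/4) k"
    proof -
      have eq: "(real (4*k+1) + 1 + \<zeta>)/4 = (\<zeta>+2)/4 + real k" by (simp add: field_simps)
      show ?thesis unfolding eq using Gpoch[of "(\<zeta>+2)/4" k] ze by simp
    qed
    have o2: "Gamma (real (4*k+1) / 4 + 1) = 1/4 * Gamma (1/4) * pochhammer (5/4) k"
    proof -
      have eq: "real (4*k+1) / 4 + 1 = 5/4 + real k" by (simp add: field_simps)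
      show ?thesis unfolding eq using Gpoch[of "5/4" k] g54 by simp
    qed
    have o3: "Gamma ((real (4*k+1) + 3)/2) = (4::real)^k * fact k * pochhammer (3/2) k"
    proof -
      have eq: "(real (4*k+1) + 3)/2 = 1 + real (2*k+1)" by (simp add: field_simps)
      show ?thesis unfolding eq Gamma_fact fact_odd by simp
    qed
    have o4: "y^(4*k+1) = y * (4^k * w^k)" by (simp add: power_mult y4 power_mult_distrib)
    have p: "pochhammer (3/2::real) k > 0" "pochhammer (5/4::real) k > 0" by (auto intro!: pochhammer_pos)
    show ?thesis unfolding t_def o1 o2 o3 o4 hc_def s_coef1 using p g14 gz2
      by (simp add: field_simps)
  qed
  have r2: "t (4*k+2) = 0" for k unfolding t_def s_coef2 by simp
  have r3: "t (4*k+3) = 0" for k unfolding t_def s_coef3 by simp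
  define A0 where "A0 = Gamma ((\<zeta>+1)/4) / sqrt 2 * 2 / sqrt pi * hyp1F2 ((\<zeta>+1)/4) (3/4) (5/4) w"
  define A1 where "A1 = Gamma ((\<zeta>+2)/4) / sqrt 2 * 4 / Gamma (1/4) * y * hyp1F2 ((\<zeta>+2)/4) (5/4) (3/2) w"
  have S: "t sums (\<Sum>j<(4::nat). (if j = 0 then A0 else if j = 1 then A1 else 0))"
  proof (rule sums_split_mod)
    fix j :: nat assume "j < 4"
    then consider "j = 0" | "j = 1" | "j = 2" | "j = 3" by linarith
    then show "(\<lambda>k. t (4*k+j)) sums (if j = 0 then A0 else if j = 1 then A1 else 0)"
    proof cases
      case 1
      have "(\<lambda>k. Gamma ((\<zeta>+1)/4) / sqrt 2 * 2 / sqrt pi * (hc ((\<zeta>+1)/4) (3/4) (5/4) k * w^k)) sums A0"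
        unfolding A0_def using hyp_sums[of "(\<zeta>+1)/4" "3/4" "5/4" w] ze by (intro sums_mult) simp
      then show ?thesis using 1 by (simp only: r0 add_0_right) simp
    next
      case 2
      have "(\<lambda>k. Gamma ((\<zeta>+2)/4) / sqrt 2 * 4 / Gamma (1/4) * y * (hc ((\<zeta>+2)/4) (5/4) (3/2) k * w^k)) sums A1"
        unfolding A1_def using hyp_sums[of "(\<zeta>+2)/4" "5/4" "3/2" w] ze by (intro sums_mult) simp
      then show ?thesis using 2 by (simp only: r1) simp
    next
      case 3
      then show ?thesis by (simp only: r2) simp
    next
      case 4
      then show ?thesis by (simp only: r3) simp
    qed
  qed simp
  have sum: "suminf t = A0 + A1"
    using sums_unique[OF S] by (simp add: numeral_eq_Suc)
  have O: "Omega1 \<alpha> \<zeta> v = v * sqrt (pi / 2) / Gamma ((\<zeta> + 1)/4) * A0 + v * sqrt (pi / 2) / Gamma ((\<zeta> + 1)/4) * A1"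
  proof -
    have "Omega1 \<alpha> \<zeta> v = v * sqrt (pi / 2) / Gamma ((\<zeta> + 1)/4) * suminf t"
      unfolding Omega1_def t_def y_def q_def by (rule refl)
    then show ?thesis unfolding sum by (simp only: distrib_left)
  qed
  have s2: "sqrt 2 > 0" "sqrt 2 * sqrt 2 = (2::real)" by auto
  have sp: "sqrt pi > 0" by simp
  have c1: "v * sqrt (pi / 2) / Gamma ((\<zeta> + 1)/4) * A0 = f2 \<alpha> \<zeta> v"
    unfolding A0_def f2_def w_def real_sqrt_divide using gz1 s2 sp by (simp add: field_simps)
  have qa: "q = sqrt 2 * \<alpha> powr (1/4)" unfolding q_def by (simp add: powr_mult four_powr)
  have a4: "\<alpha> powr (1/4) > 0" using al by simp
  have c2: "v * sqrt (pi / 2) / Gamma ((\<zeta> + 1)/4) * A1 =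
     - (sqrt (2 * pi) * Gamma ((\<zeta>+2)/4) / (\<alpha> powr (1/4) * Gamma (1/4) * Gamma ((\<zeta>+1)/4))) * f3 \<alpha> \<zeta> v"
  proof -
    have K1: "4 / sqrt 2 / sqrt 2 = (2::real)" by (simp add: divide_divide_eq_left)
    have K2: "sqrt (pi/2) * 2 = sqrt (2*pi)"
    proof -
      have "sqrt (pi/2) * 2 = sqrt (pi/2) * sqrt 4" by simp
      also have "\<dots> = sqrt (pi/2 * 4)" by (simp only: real_sqrt_mult)
      finally show ?thesis by simp
    qed
    have K: "sqrt (pi/2) * (4 / sqrt 2) / sqrt 2 = sqrt (2*pi)"
      using K1 K2 by (simp add: mult.assoc)
    have "v * sqrt (pi / 2) / Gamma ((\<zeta> + 1)/4) * A1 =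
       - (sqrt (pi/2) * 2) * Gamma ((\<zeta>+2)/4) / (\<alpha> powr (1/4) * Gamma (1/4) * Gamma ((\<zeta>+1)/4)) * (v^2 * hyp1F2 ((\<zeta>+2)/4) (5/4) (3/2) w)"
    proof -
      have ss: "sqrt 2 * (sqrt 2 * x) = 2 * x" for x :: real by (simp add: mult.assoc[symmetric])
      show ?thesis unfolding A1_def y_def qa using gz1 g14 s2 a4
        by (simp add: field_simps power2_eq_square ss)
    qed
    then show ?thesis unfolding K2 f3_def w_def by simp
  qed
  show ?thesis unfolding O c1 c2 by simp
qed

lemma hyp_ge1:
  fixes a b1 b2 x :: real
  assumes "a > 0" "b1 > 0" "b2 > 0" "x \<ge> 0"
  shows "hyp1F2 a b1 b2 x \<ge> 1"
proof -
  have sm: "summable (\<lambda>n. hc a b1 b2 n * x^n)" by (rule hyp_summable[OF assms(1-3)])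
  have "(\<Sum>n\<in>{0}. hc a b1 b2 n * x^n) \<le> (\<Sum>n. hc a b1 b2 n * x^n)"
  proof (rule sum_le_suminf[OF sm])
    fix n
    have "0 \<le> hc a b1 b2 n" using hc_pos[OF assms(1-3)] less_imp_le by blast
    then show "0 \<le> hc a b1 b2 n * x ^ n" using assms(4) by simp
  qed simp
  then show ?thesis unfolding hyp_eq by (simp add: hc_def)
qed

lemma hyp_at0: "hyp1F2 a b1 b2 0 = 1"
  unfolding hyp_eq using powser_zero[of "hc a b1 b2"] by (simp add: hc_def)

theorem mainTheorem3:
  fixes \<alpha> \<zeta> :: real
  assumes "\<alpha> > 0" and "\<zeta> > 0"
  shows "solves_ODE \<alpha> \<zeta> (f1 \<alpha> \<zeta>) \<and> solves_ODE \<alpha> \<zeta> (f2 \<alpha> \<zeta>) \<and> solves_ODE \<alpha> \<zeta> (f3 \<alpha> \<zeta>)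
    \<and> (\<forall>c1 c2 c3 :: real.
          (\<forall>v. c1 * f1 \<alpha> \<zeta> v + c2 * f2 \<alpha> \<zeta> v + c3 * f3 \<alpha> \<zeta> v = 0)
          \<longrightarrow> c1 = 0 \<and> c2 = 0 \<and> c3 = 0)
    \<and> (\<forall>v. Omega0 \<alpha> \<zeta> v = f1 \<alpha> \<zeta> v
             - 2 * Gamma (3/4) * Gamma ((\<zeta>+2)/4) / (sqrt \<alpha> * Gamma (1/4) * Gamma (\<zeta>/4)) * f3 \<alpha> \<zeta> v)
    \<and> (\<forall>v. Omega1 \<alpha> \<zeta> v = f2 \<alpha> \<zeta> v
             - sqrt (2 * pi) * Gamma ((\<zeta>+2)/4) / (\<alpha> powr (1/4) * Gamma (1/4) * Gamma ((\<zeta>+1)/4)) * f3 \<alpha> \<zeta> v)"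
proof -
  note al = assms(1) and ze = assms(2)
  have S1: "solves_ODE \<alpha> \<zeta> (f1 \<alpha> \<zeta>)"
  proof -
    have "f1 \<alpha> \<zeta> = (\<lambda>v. v^0 * hyp1F2 (\<zeta>/4) (1/2) (3/4) (v^4 / (16*\<alpha>)))"
      by (simp add: f1_def fun_eq_iff)
    moreover have "solves_ODE \<alpha> \<zeta> (\<lambda>v. v^0 * hyp1F2 (\<zeta>/4) (1/2) (3/4) (v^4 / (16*\<alpha>)))"
      by (rule f_solves) (use al ze in \<open>auto simp: field_simps\<close>)
    ultimately show ?thesis by simp
  qed
  have S2: "solves_ODE \<alpha> \<zeta> (f2 \<alpha> \<zeta>)"
  proof -
    have "f2 \<alpha> \<zeta> = (\<lambda>v. v^1 * hyp1F2 ((\<zeta>+1)/4) (3/4) (5/4) (v^4 / (16*\<alpha>)))"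
      by (simp add: f2_def fun_eq_iff)
    moreover have "solves_ODE \<alpha> \<zeta> (\<lambda>v. v^1 * hyp1F2 ((\<zeta>+1)/4) (3/4) (5/4) (v^4 / (16*\<alpha>)))"
      by (rule f_solves) (use al ze in \<open>auto simp: field_simps\<close>)
    ultimately show ?thesis by simp
  qed
  have S3: "solves_ODE \<alpha> \<zeta> (f3 \<alpha> \<zeta>)"
  proof -
    have "f3 \<alpha> \<zeta> = (\<lambda>v. v^2 * hyp1F2 ((\<zeta>+2)/4) (5/4) (3/2) (v^4 / (16*\<alpha>)))"
      by (simp add: f3_def fun_eq_iff)
    moreover have "solves_ODE \<alpha> \<zeta> (\<lambda>v. v^2 * hyp1F2 ((\<zeta>+2)/4) (5/4) (3/2) (v^4 / (16*\<alpha>)))"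
      by (rule f_solves) (use al ze in \<open>auto simp: field_simps\<close>)
    ultimately show ?thesis by simp
  qed
  have LI: "c1 = 0 \<and> c2 = 0 \<and> c3 = 0"
    if h: "\<forall>v. c1 * f1 \<alpha> \<zeta> v + c2 * f2 \<alpha> \<zeta> v + c3 * f3 \<alpha> \<zeta> v = 0" for c1 c2 c3
  proof -
    define A where "A = hyp1F2 ((\<zeta>+1)/4) (3/4) (5/4) (1 / (16*\<alpha>))"
    define B where "B = hyp1F2 ((\<zeta>+2)/4) (5/4) (3/2) (1 / (16*\<alpha>))"
    have A: "A \<ge> 1" unfolding A_def by (rule hyp_ge1) (use al ze in auto)
    have B: "B \<ge> 1" unfolding B_def by (rule hyp_ge1) (use al ze in auto)
    have "c1 * f1 \<alpha> \<zeta> 0 + c2 * f2 \<alpha> \<zeta> 0 + c3 * f3 \<alpha> \<zeta> 0 = 0" using h by blast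
    then have c1: "c1 = 0" by (simp add: f1_def f2_def f3_def hyp_at0)
    have "c1 * f1 \<alpha> \<zeta> 1 + c2 * f2 \<alpha> \<zeta> 1 + c3 * f3 \<alpha> \<zeta> 1 = 0" using h by blast
    then have e1: "c2 * A + c3 * B = 0" using c1 by (simp add: f2_def f3_def A_def B_def)
    have "c1 * f1 \<alpha> \<zeta> (-1) + c2 * f2 \<alpha> \<zeta> (-1) + c3 * f3 \<alpha> \<zeta> (-1) = 0" using h by blast
    then have e2: "- (c2 * A) + c3 * B = 0" using c1 by (simp add: f2_def f3_def A_def B_def)
    have "c3 * B = 0" using e1 e2 by linarith
    then have c3: "c3 = 0" using B by simp
    have "c2 * A = 0" using e1 e2 by linarith
    then have c2: "c2 = 0" using A by simp
    show ?thesis using c1 c2 c3 by simp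
  qed
  show ?thesis using S1 S2 S3 LI Omega0_eq[OF al ze] Omega1_eq[OF al ze] by blast
qed

end
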